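(* Let $k\ge2$ be an integer and let $H_k$ be the graph with half-edges obtained from $K_{k,k}$ by deleting one vertex but keeping its $k$ incident edges as half-edges. Let $e\ne e'$ be two half-edges of $H_k$ with end vertices $x$ and $x'$ respectively. Then for every positive integer $n$, $H_k$ admits an $(n(k+1)+1,n)$-total colouring $\gamma$ such that $\gamma(e)=0$, $\gamma(e')=1$, $\gamma(x)=n+1$ and $\gamma(x')=nk+1$.
   Context: A half-edge has exactly one end vertex. For integers $p\ge q\ge1$, a $(p,q)$-total colouring of a graph (possibly with half-edges) is a map $c$ from the set of vertices, edges and half-edges to $\{0,1,\ldots,p-1\}$ such that $q\le|c(a)-c(b)|\le p-q$ whenever $a,b$ are two adjacent vertices, two edges/half-edges sharing an end vertex, or a vertex and an edge or half-edge incident with it. *)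

theory Defs
  imports Main
begin

text \<open>Graphs with half-edges, given by a vertex set V, a set Es of edges and
half-edges, and a map ends giving the set of end vertices of each element of Es
(two vertices for an ordinary edge, one for a half-edge).\<close>

definition sep_ok :: "nat \<Rightarrow> nat \<Rightarrow> nat \<Rightarrow> nat \<Rightarrow> bool" where
  "sep_ok p q a b \<longleftrightarrow>
     int q \<le> \<bar>int a - int b\<bar> \<and> \<bar>int a - int b\<bar> \<le> int p - int q"

definition total_colouring ::
  "nat \<Rightarrow> nat \<Rightarrow> 'a set \<Rightarrow> 'a set \<Rightarrow> ('a \<Rightarrow> 'a set) \<Rightarrow> ('a \<Rightarrow> nat) \<Rightarrow> bool" where
  "total_colouring p q V Es ends c \<longleftrightarrow>
     (\<forall>a \<in> V \<union> Es. c a < p) \<and>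
     (\<forall>u\<in>V. \<forall>v\<in>V. u \<noteq> v \<and> (\<exists>e\<in>Es. ends e = {u, v}) \<longrightarrow> sep_ok p q (c u) (c v)) \<and>
     (\<forall>e\<in>Es. \<forall>f\<in>Es. e \<noteq> f \<and> ends e \<inter> ends f \<noteq> {} \<longrightarrow> sep_ok p q (c e) (c f)) \<and>
     (\<forall>v\<in>V. \<forall>e\<in>Es. v \<in> ends e \<longrightarrow> sep_ok p q (c v) (c e))"

text \<open>H_k: K_{k,k} with parts {VA i | i<k} and {VB j | j<k}; the vertex VB (k-1)
is deleted and its k incident edges kept as half-edges HE i at VA i.\<close>

datatype hk_elt = VA nat | VB nat | Ed nat nat | HE nat

definition hk_vertices :: "nat \<Rightarrow> hk_elt set" where
  "hk_vertices k = {VA i | i. i < k} \<union> {VB j | j. j < k - 1}"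

definition hk_half_edges :: "nat \<Rightarrow> hk_elt set" where
  "hk_half_edges k = {HE i | i. i < k}"

definition hk_edges :: "nat \<Rightarrow> hk_elt set" where
  "hk_edges k = {Ed i j | i j. i < k \<and> j < k - 1} \<union> hk_half_edges k"

fun hk_ends :: "hk_elt \<Rightarrow> hk_elt set" where
  "hk_ends (Ed i j) = {VA i, VB j}"
| "hk_ends (HE i) = {VA i}"
| "hk_ends _ = {}"

end

theory Submission
  imports Defs "HOL-Number_Theory.Cong"
begin

definition fF :: "nat \<Rightarrow> nat \<Rightarrow> nat \<Rightarrow> nat" where
  "fF k a i = (i + k - a + 1) mod k"

definition piF :: "nat \<Rightarrow> nat \<Rightarrow> nat \<Rightarrow> nat \<Rightarrow> nat" where
  "piF k a b i = (if fF k a i = fF k a b then 0 else if fF k a i = 0 then fF k a b else fF k a i)"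

definition LL :: "nat \<Rightarrow> nat \<Rightarrow> nat \<Rightarrow> nat \<Rightarrow> nat \<Rightarrow> nat" where
  "LL k a b i j = (piF k a b i + j) mod k + 1"

fun gam :: "nat \<Rightarrow> nat \<Rightarrow> nat \<Rightarrow> nat \<Rightarrow> hk_elt \<Rightarrow> nat" where
  "gam k n a b (VA i) = n * LL k a b i (k - 1) + 1"
| "gam k n a b (VB j) = 1"
| "gam k n a b (Ed i j) = n * LL k a b i j + 1"
| "gam k n a b (HE i) = (if i = a then 0 else 1)"

lemma mod_cancel_aux:
  fixes x y c k :: nat
  assumes "(x + c) mod k = (y + c) mod k" "x < k" "y < k"
  shows "x = y"
proof -
  have "[x + c = y + c] (mod k)" using assms(1) by (simp add: cong_def)
  hence "[x = y] (mod k)" by (simp add: cong_add_rcancel_nat)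
  thus ?thesis using assms by (simp add: cong_def)
qed

lemma fF_inj:
  assumes "a < k" "i < k" "i' < k" "fF k a i = fF k a i'"
  shows "i = i'"
proof -
  have "(i + (k - a + 1)) mod k = (i' + (k - a + 1)) mod k"
    using assms by (simp add: fF_def add.assoc)
  thus ?thesis using mod_cancel_aux assms by blast
qed

lemma fF_lt: "k \<ge> 2 \<Longrightarrow> fF k a i < k" by (simp add: fF_def)

lemma piF_lt: "k \<ge> 2 \<Longrightarrow> piF k a b i < k"
  by (simp add: piF_def fF_lt)

lemma piF_inj:
  assumes "k \<ge> 2" "a < k" "b < k" "i < k" "i' < k" "piF k a b i = piF k a b i'"
  shows "i = i'"
proof -
  have "fF k a i = fF k a i'"
    using assms(6) unfolding piF_def by (auto split: if_splits)
  thus ?thesis using fF_inj assms by blast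
qed

lemma fF_a: assumes "k \<ge> 2" "a < k" shows "fF k a a = 1"
proof -
  have "(1 + k) mod k = 1" using mod_add_self2[of 1 k] assms by simp
  thus ?thesis using assms by (simp add: fF_def add.commute)
qed

lemma piF_a: assumes "k \<ge> 2" "a < k" "b < k" "a \<noteq> b" shows "piF k a b a = 1"
proof -
  have "fF k a b \<noteq> 1" using fF_inj[of a k b a] fF_a assms by force
  thus ?thesis using assms by (simp add: piF_def fF_a)
qed

lemma piF_b: "piF k a b b = 0" by (simp add: piF_def)

lemma LL_range: "k \<ge> 2 \<Longrightarrow> 1 \<le> LL k a b i j \<and> LL k a b i j \<le> k"
  by (simp add: LL_def Suc_leI)

lemma LL_row: assumes "k \<ge> 2" "j < k" "j' < k" "LL k a b i j = LL k a b i j'" shows "j = j'"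
proof -
  have "(j + piF k a b i) mod k = (j' + piF k a b i) mod k" using assms(4) by (simp add: LL_def add.commute)
  thus ?thesis using mod_cancel_aux assms by blast
qed

lemma LL_col: assumes "k \<ge> 2" "a < k" "b < k" "i < k" "i' < k" "LL k a b i j = LL k a b i' j" shows "i = i'"
proof -
  have "(piF k a b i + j) mod k = (piF k a b i' + j) mod k" using assms(6) by (simp add: LL_def)
  hence "piF k a b i = piF k a b i'" using mod_cancel_aux piF_lt assms(1) by blast
  thus ?thesis using piF_inj assms by blast
qed

lemma LL_a: assumes "k \<ge> 2" "a < k" "b < k" "a \<noteq> b" shows "LL k a b a (k - 1) = 1"
  using assms by (simp add: LL_def piF_a)

lemma LL_b: assumes "k \<ge> 2" shows "LL k a b b (k - 1) = k"
  using assms by (simp add: LL_def piF_b)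

lemma slot_ok:
  assumes "s \<noteq> t" "s \<le> k" "t \<le> k" "n \<ge> 1"
  shows "sep_ok (n * (k + 1) + 1) n (n * s + 1) (n * t + 1)"
proof -
  { fix s t :: nat assume st: "s < t" "t \<le> k"
    have "int (n * t + 1) - int (n * s + 1) = int n * (int t - int s)"
      using st by (simp add: algebra_simps of_nat_diff)
    moreover have "int n * 1 \<le> int n * (int t - int s)" using st by (intro mult_left_mono) auto
    moreover have "int n * (int t - int s) \<le> int n * int k" using st by (intro mult_left_mono) auto
    ultimately have "int n \<le> \<bar>int (n * t + 1) - int (n * s + 1)\<bar> \<and>
       \<bar>int (n * t + 1) - int (n * s + 1)\<bar> \<le> int (n * (k + 1) + 1) - int n"
      by (simp add: algebra_simps)
    hence "sep_ok (n * (k + 1) + 1) n (n * s + 1) (n * t + 1) \<and> sep_ok (n * (k + 1) + 1) n (n * t + 1) (n * s + 1)"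
      unfolding sep_ok_def by (simp add: abs_minus_commute)
  }
  thus ?thesis using assms by (cases "s < t") (auto simp: not_less order.order_iff_strict)
qed

lemma zero_ok:
  assumes "1 \<le> s" "s \<le> k" "n \<ge> 1"
  shows "sep_ok (n * (k + 1) + 1) n 0 (n * s + 1)" "sep_ok (n * (k + 1) + 1) n (n * s + 1) 0"
proof -
  have "int n * 1 \<le> int n * int s" using assms by (intro mult_left_mono) auto
  moreover have "int n * int s \<le> int n * int k" using assms by (intro mult_left_mono) auto
  ultimately show "sep_ok (n * (k + 1) + 1) n 0 (n * s + 1)" "sep_ok (n * (k + 1) + 1) n (n * s + 1) 0"
    unfolding sep_ok_def by (simp_all add: algebra_simps)
qed

theorem lemma3:
  fixes k n :: nat and e e' x x' :: hk_elt
  assumes "k \<ge> 2"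
    and "e \<in> hk_half_edges k" and "e' \<in> hk_half_edges k" and "e \<noteq> e'"
    and "hk_ends e = {x}" and "hk_ends e' = {x'}"
    and "n \<ge> 1"
  shows "\<exists>\<gamma>. total_colouring (n * (k + 1) + 1) n (hk_vertices k) (hk_edges k) hk_ends \<gamma>
            \<and> \<gamma> e = 0 \<and> \<gamma> e' = 1 \<and> \<gamma> x = n + 1 \<and> \<gamma> x' = n * k + 1"
proof -
  obtain a where a: "e = HE a" "a < k" using assms(2) by (auto simp: hk_half_edges_def)
  obtain b where b: "e' = HE b" "b < k" using assms(3) by (auto simp: hk_half_edges_def)
  have ab: "a \<noteq> b" using a b assms(4) by auto
  have x: "x = VA a" using assms(5) a by auto
  have x': "x' = VA b" using assms(6) b by auto
  have k: "k \<ge> 2" by fact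
  have n: "n \<ge> 1" by fact
  let ?g = "gam k n a b"
  let ?p = "n * (k + 1) + 1"
  have SL: "\<And>s t. s \<noteq> t \<Longrightarrow> s \<le> k \<Longrightarrow> t \<le> k \<Longrightarrow> sep_ok ?p n (n * s + 1) (n * t + 1)"
    using slot_ok n by blast
  have SL0: "\<And>s. 1 \<le> s \<Longrightarrow> s \<le> k \<Longrightarrow> sep_ok ?p n 0 (n * s + 1) \<and> sep_ok ?p n (n * s + 1) 0"
    using zero_ok n by blast
  have R: "\<And>i j. 1 \<le> LL k a b i j \<and> LL k a b i j \<le> k" using LL_range k by blast
  have ga: "\<And>i j. ?g (Ed i j) = n * LL k a b i j + 1" by simp
  have c1: "\<forall>c \<in> hk_vertices k \<union> hk_edges k. ?g c < ?p"
  proof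
    fix c assume "c \<in> hk_vertices k \<union> hk_edges k"
    show "?g c < ?p"
    proof (cases c)
      case (VA i)
      have "n * LL k a b i (k - 1) \<le> n * k" using R mult_le_mono2 by blast
      moreover have "?g c = n * LL k a b i (k - 1) + 1" using VA by simp
      moreover have "n * (k + 1) + 1 = n * k + n + 1" by (simp add: algebra_simps)
      ultimately show ?thesis using n by linarith
    next
      case (Ed i j)
      have "n * LL k a b i j \<le> n * k" using R mult_le_mono2 by blast
      moreover have "?g c = n * LL k a b i j + 1" using Ed by simp
      moreover have "n * (k + 1) + 1 = n * k + n + 1" by (simp add: algebra_simps)
      ultimately show ?thesis using n by linarith
    qed (use n in auto)
  qed
  have c2: "\<forall>u\<in>hk_vertices k. \<forall>v\<in>hk_vertices k. u \<noteq> v \<and> (\<exists>e\<in>hk_edges k. hk_ends e = {u, v})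
      \<longrightarrow> sep_ok ?p n (?g u) (?g v)"
  proof (intro ballI impI)
    fix u v assume uv: "u \<in> hk_vertices k" "v \<in> hk_vertices k" "u \<noteq> v \<and> (\<exists>e\<in>hk_edges k. hk_ends e = {u, v})"
    then obtain f where f: "f \<in> hk_edges k" "hk_ends f = {u, v}" by blast
    show "sep_ok ?p n (?g u) (?g v)"
    proof (cases f)
      case (Ed i j)
      hence "(u = VA i \<and> v = VB j) \<or> (u = VB j \<and> v = VA i)" using f uv by (auto simp: doubleton_eq_iff)
      then show ?thesis using SL[of 0 "LL k a b i (k - 1)"] SL[of "LL k a b i (k - 1)" 0] R[of i "k - 1"]
        by auto
    next
      case (HE i)
      then show ?thesis using f uv by (auto simp: doubleton_eq_iff)
    qed (use f in \<open>auto simp: hk_edges_def hk_half_edges_def\<close>)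
  qed
  have c3: "\<forall>e\<in>hk_edges k. \<forall>f\<in>hk_edges k. e \<noteq> f \<and> hk_ends e \<inter> hk_ends f \<noteq> {} \<longrightarrow> sep_ok ?p n (?g e) (?g f)"
  proof (intro ballI impI)
    fix e f assume ef: "e \<in> hk_edges k" "f \<in> hk_edges k" "e \<noteq> f \<and> hk_ends e \<inter> hk_ends f \<noteq> {}"
    have E: "\<And>c. c \<in> hk_edges k \<Longrightarrow> (\<exists>i j. c = Ed i j \<and> i < k \<and> j < k - 1) \<or> (\<exists>i. c = HE i \<and> i < k)"
      by (auto simp: hk_edges_def hk_half_edges_def)
    have HEok: "\<And>i j. sep_ok ?p n (?g (Ed i j)) (?g (HE i)) \<and> sep_ok ?p n (?g (HE i)) (?g (Ed i j))"
    proof -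
      fix i j
      show "sep_ok ?p n (?g (Ed i j)) (?g (HE i)) \<and> sep_ok ?p n (?g (HE i)) (?g (Ed i j))"
        using SL[of 0 "LL k a b i j"] SL[of "LL k a b i j" 0] SL0[of "LL k a b i j"] R[of i j] by auto
    qed
    from E[OF ef(1)] E[OF ef(2)] ef(3) show "sep_ok ?p n (?g e) (?g f)"
    proof (elim disjE exE conjE)
      fix i j i' j' assume *: "e = Ed i j" "i < k" "j < k - 1" "f = Ed i' j'" "i' < k" "j' < k - 1"
        "e \<noteq> f" "hk_ends e \<inter> hk_ends f \<noteq> {}"
      hence "(i = i' \<and> j \<noteq> j') \<or> (j = j' \<and> i \<noteq> i')" by auto
      thus ?thesis
      proof
        assume h: "i = i' \<and> j \<noteq> j'"
        hence "LL k a b i j \<noteq> LL k a b i j'" proof -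
          have "j < k" "j' < k" using * by linarith+
          thus ?thesis using LL_row[of k j j' a b i] h k by blast
        qed
        thus ?thesis using * h SL R by auto
      next
        assume h: "j = j' \<and> i \<noteq> i'"
        hence "LL k a b i j \<noteq> LL k a b i' j" using LL_col[of k a b i i' j] * k a b by auto
        thus ?thesis using * h SL R by auto
      qed
    next
      fix i j i' assume *: "e = Ed i j" "f = HE i'" "hk_ends e \<inter> hk_ends f \<noteq> {}"
      hence "i = i'" by auto
      thus ?thesis using * HEok by auto
    next
      fix i j i' assume *: "f = Ed i j" "e = HE i'" "hk_ends e \<inter> hk_ends f \<noteq> {}"
      hence "i = i'" by auto
      thus ?thesis using * HEok by auto
    next
      fix i i' assume *: "e = HE i" "f = HE i'" "e \<noteq> f" "hk_ends e \<inter> hk_ends f \<noteq> {}"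
      thus ?thesis by auto
    qed
  qed
  have c4: "\<forall>v\<in>hk_vertices k. \<forall>e\<in>hk_edges k. v \<in> hk_ends e \<longrightarrow> sep_ok ?p n (?g v) (?g e)"
  proof (intro ballI impI)
    fix v f assume vf: "v \<in> hk_vertices k" "f \<in> hk_edges k" "v \<in> hk_ends f"
    show "sep_ok ?p n (?g v) (?g f)"
    proof (cases f)
      case (Ed i j)
      hence ij: "i < k" "j < k - 1" using vf(2) by (auto simp: hk_edges_def hk_half_edges_def)
      from vf(3) Ed have "v = VA i \<or> v = VB j" by auto
      thus ?thesis
      proof
        assume "v = VA i"
        moreover have "LL k a b i (k - 1) \<noteq> LL k a b i j" proof -
          have "k - 1 < k" "j < k" "k - 1 \<noteq> j" using ij k by linarith+
          thus ?thesis using LL_row[of k "k - 1" j a b i] k by blast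
        qed
        ultimately show ?thesis using Ed SL R by auto
      next
        assume "v = VB j"
        thus ?thesis using Ed SL[of 0 "LL k a b i j"] R[of i j] by auto
      qed
    next
      case (HE i)
      hence "v = VA i" using vf by auto
      thus ?thesis using HE SL[of "LL k a b i (k - 1)" 0] SL0[of "LL k a b i (k - 1)"] R[of i "k - 1"] by auto
    qed (use vf in auto)
  qed
  have tc: "total_colouring ?p n (hk_vertices k) (hk_edges k) hk_ends ?g"
    unfolding total_colouring_def using c1 c2 c3 c4 by blast
  have "?g x = n + 1" using x LL_a[OF k a(2) b(2) ab] by simp
  moreover have "?g x' = n * k + 1" using x' LL_b[OF k] by simp
  moreover have "?g e = 0" "?g e' = 1" using a b ab by auto
  ultimately show ?thesis using tc by blast
qed

end
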